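(* Let $(\mathfrak{h},\langle\cdot,\cdot\rangle)$ be a Kundt pair on $\mathfrak{sol}$. Then it is equivalent to $(\mathfrak{h}_0,\langle\cdot,\cdot\rangle_0)$ where, with matrices taken in the basis $(X_1,X_2,X_3)$, either (1) $\langle\cdot,\cdot\rangle_0=\begin{pmatrix}\lambda&0&0\\0&0&-1\\0&-1&0\end{pmatrix}$, $\lambda>0$, and $\mathfrak{h}_0=\mathrm{span}\{X_2,X_1\}$ or $\mathfrak{h}_0=\mathrm{span}\{X_3,X_1\}$; (2) $\langle\cdot,\cdot\rangle_0=\begin{pmatrix}\lambda^2&0&0\\0&\lambda&1\\0&1&0\end{pmatrix}$, $\lambda\neq 0$, and $\mathfrak{h}_0=\mathrm{span}\{X_3,X_1\}$; (3) $\langle\cdot,\cdot\rangle_0=\begin{pmatrix}0&0&-\frac{2}{b}\\0&1&1\\-\frac{2}{b}&1&1\end{pmatrix}$, $b>0$, and $\mathfrak{h}_0=\mathrm{span}\{X_2,X_3\}$; or (4) $\langle\cdot,\cdot\rangle_0=\begin{pmatrix}0&0&1\\0&1&0\\1&0&0\end{pmatrix}$ and $\mathfrak{h}_0=\mathrm{span}\{X_2,X_3\}$.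
   Context: $\mathfrak{sol}$ has basis $(X_1,X_2,X_3)$ with only nonzero brackets $[X_1,X_2]=X_2$, $[X_1,X_3]=-X_3$. For a Lorentzian scalar product $\langle\cdot,\cdot\rangle$ on a Lie algebra $\mathfrak{g}$, the Levi-Civita product is defined by $2\langle u\bullet v,w\rangle=\langle[u,v],w\rangle+\langle[w,u],v\rangle+\langle[w,v],u\rangle$. A Kundt pair on $\mathfrak{g}$ is a pair consisting of a Lorentzian scalar product $\langle\cdot,\cdot\rangle$ and a codimension one subalgebra $\mathfrak{h}$ which is $\langle\cdot,\cdot\rangle$-degenerate, stable by $\bullet$, and such that $e\bullet e=0$ for all $e\in\mathfrak{h}^\perp$. Two Kundt pairs $(\mathfrak{h}_1,\langle\cdot,\cdot\rangle_1)$, $(\mathfrak{h}_2,\langle\cdot,\cdot\rangle_2)$ are equivalent if there is a Lie algebra automorphism $\phi$ of $\mathfrak{g}$ with $\phi(\mathfrak{h}_1)=\mathfrak{h}_2$ and $\phi^*\langle\cdot,\cdot\rangle_2=\langle\cdot,\cdot\rangle_1$. *)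

theory Defs
  imports "HOL-Analysis.Analysis"
begin

text \<open>The Lie algebra sol is modelled on real^3; the vector u corresponds to
  u$1 X1 + u$2 X2 + u$3 X3, so X_i = axis i 1.\<close>

definition X :: "3 \<Rightarrow> real^3" where
  "X i = axis i 1"

text \<open>Lie bracket of sol: [X1,X2] = X2, [X1,X3] = -X3, [X2,X3] = 0 (bilinear, skew).\<close>
definition sol_br :: "real^3 \<Rightarrow> real^3 \<Rightarrow> real^3" where
  "sol_br u v = (u$1 * v$2 - u$2 * v$1) *\<^sub>R X 2 - (u$1 * v$3 - u$3 * v$1) *\<^sub>R X 3"

definition sp :: "real^3^3 \<Rightarrow> real^3 \<Rightarrow> real^3 \<Rightarrow> real" where
  "sp S u v = u \<bullet> (S *v v)"

definition mat3 :: "real \<Rightarrow> real \<Rightarrow> real \<Rightarrow> real \<Rightarrow> real \<Rightarrow> real \<Rightarrow> real \<Rightarrow> real \<Rightarrow> real \<Rightarrow> real^3^3" where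
  "mat3 a11 a12 a13 a21 a22 a23 a31 a32 a33 =
     (\<chi> i j. if i = 1 then (if j = 1 then a11 else if j = 2 then a12 else a13)
             else if i = 2 then (if j = 1 then a21 else if j = 2 then a22 else a23)
             else (if j = 1 then a31 else if j = 2 then a32 else a33))"

definition lorentzian :: "real^3^3 \<Rightarrow> bool" where
  "lorentzian S \<longleftrightarrow> transpose S = S \<and>
     (\<exists>P :: real^3^3. invertible P \<and> transpose P ** S ** P = mat3 (-1) 0 0 0 1 0 0 0 1)"

definition lc :: "real^3^3 \<Rightarrow> real^3 \<Rightarrow> real^3 \<Rightarrow> real^3" where
  "lc S u v = (THE x. \<forall>w. 2 * sp S x w =
      sp S (sol_br u v) w + sp S (sol_br w u) v + sp S (sol_br w v) u)"

definition orth :: "real^3^3 \<Rightarrow> (real^3) set \<Rightarrow> (real^3) set" where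
  "orth S h = {e. \<forall>x\<in>h. sp S e x = 0}"

definition kundt_pair :: "(real^3) set \<Rightarrow> real^3^3 \<Rightarrow> bool" where
  "kundt_pair h S \<longleftrightarrow> lorentzian S \<and>
     subspace h \<and> dim h = 2 \<and> (\<forall>u\<in>h. \<forall>v\<in>h. sol_br u v \<in> h) \<and>
     (\<exists>x\<in>h. x \<noteq> 0 \<and> (\<forall>y\<in>h. sp S x y = 0)) \<and>
     (\<forall>u\<in>h. \<forall>v\<in>h. lc S u v \<in> h) \<and>
     (\<forall>e\<in>orth S h. lc S e e = 0)"

definition sol_aut :: "(real^3 \<Rightarrow> real^3) \<Rightarrow> bool" where
  "sol_aut \<phi> \<longleftrightarrow> linear \<phi> \<and> bij \<phi> \<and> (\<forall>u v. \<phi> (sol_br u v) = sol_br (\<phi> u) (\<phi> v))"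

definition kundt_equiv :: "(real^3) set \<Rightarrow> real^3^3 \<Rightarrow> (real^3) set \<Rightarrow> real^3^3 \<Rightarrow> bool" where
  "kundt_equiv h1 S1 h2 S2 \<longleftrightarrow> (\<exists>\<phi>. sol_aut \<phi> \<and> \<phi> ` h1 = h2 \<and>
     (\<forall>u v. sp S2 (\<phi> u) (\<phi> v) = sp S1 u v))"

end

theory Submission
  imports Defs
begin

lemma X_comp: "X i $ j = (if j = i then 1 else 0)"
  by (simp add: X_def axis_def)

lemma br_1[simp]: "sol_br u v $ 1 = 0"
  and br_2[simp]: "sol_br u v $ 2 = u$1 * v$2 - u$2 * v$1"
  and br_3[simp]: "sol_br u v $ 3 = -(u$1 * v$3 - u$3 * v$1)"
  by (simp_all add: sol_br_def X_comp)

lemma mat3_comp[simp]: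
  "mat3 a11 a12 a13 a21 a22 a23 a31 a32 a33 $ 1 $ 1 = a11"
  "mat3 a11 a12 a13 a21 a22 a23 a31 a32 a33 $ 1 $ 2 = a12"
  "mat3 a11 a12 a13 a21 a22 a23 a31 a32 a33 $ 1 $ 3 = a13"
  "mat3 a11 a12 a13 a21 a22 a23 a31 a32 a33 $ 2 $ 1 = a21"
  "mat3 a11 a12 a13 a21 a22 a23 a31 a32 a33 $ 2 $ 2 = a22"
  "mat3 a11 a12 a13 a21 a22 a23 a31 a32 a33 $ 2 $ 3 = a23"
  "mat3 a11 a12 a13 a21 a22 a23 a31 a32 a33 $ 3 $ 1 = a31"
  "mat3 a11 a12 a13 a21 a22 a23 a31 a32 a33 $ 3 $ 2 = a32"
  "mat3 a11 a12 a13 a21 a22 a23 a31 a32 a33 $ 3 $ 3 = a33"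
  by (simp_all add: mat3_def)

lemma mat3_eq_iff: "(M = mat3 a11 a12 a13 a21 a22 a23 a31 a32 a33) \<longleftrightarrow>
  M$1$1 = a11 \<and> M$1$2 = a12 \<and> M$1$3 = a13 \<and> M$2$1 = a21 \<and> M$2$2 = a22 \<and> M$2$3 = a23 \<and>
  M$3$1 = a31 \<and> M$3$2 = a32 \<and> M$3$3 = a33"
  by (auto simp: vec_eq_iff forall_3)

lemma mv3[simp]:
  "(mat3 a11 a12 a13 a21 a22 a23 a31 a32 a33 *v x) $ 1 = a11 * x$1 + a12 * x$2 + a13 * x$3"
  "(mat3 a11 a12 a13 a21 a22 a23 a31 a32 a33 *v x) $ 2 = a21 * x$1 + a22 * x$2 + a23 * x$3"
  "(mat3 a11 a12 a13 a21 a22 a23 a31 a32 a33 *v x) $ 3 = a31 * x$1 + a32 * x$2 + a33 * x$3"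
  by (simp_all add: matrix_vector_mult_def sum_3)

lemma inner3: "(x::real^3) \<bullet> y = x$1 * y$1 + x$2 * y$2 + x$3 * y$3"
  by (simp add: inner_vec_def sum_3)

lemma sp_mat3: "sp (mat3 a11 a12 a13 a21 a22 a23 a31 a32 a33) u v =
   u$1 * (a11 * v$1 + a12 * v$2 + a13 * v$3) + u$2 * (a21 * v$1 + a22 * v$2 + a23 * v$3)
 + u$3 * (a31 * v$1 + a32 * v$2 + a33 * v$3)"
  by (simp add: sp_def inner3)

lemma sym_mat3: assumes "transpose S = S"
  shows "S = mat3 (S$1$1) (S$1$2) (S$1$3) (S$1$2) (S$2$2) (S$2$3) (S$1$3) (S$2$3) (S$3$3)"
proof -
  have e: "S$i$j = S$j$i" for i j
  proof -
    have "S$i$j = (transpose S)$i$j" using assms by simp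
    also have "\<dots> = S$j$i" by (simp add: transpose_def)
    finally show ?thesis .
  qed
  show ?thesis unfolding mat3_eq_iff using e[of 2 1] e[of 3 1] e[of 3 2] by simp
qed

lemma mm3: "mat3 a11 a12 a13 a21 a22 a23 a31 a32 a33 ** mat3 b11 b12 b13 b21 b22 b23 b31 b32 b33
  = mat3 (a11*b11+a12*b21+a13*b31) (a11*b12+a12*b22+a13*b32) (a11*b13+a12*b23+a13*b33)
         (a21*b11+a22*b21+a23*b31) (a21*b12+a22*b22+a23*b32) (a21*b13+a22*b23+a23*b33)
         (a31*b11+a32*b21+a33*b31) (a31*b12+a32*b22+a33*b32) (a31*b13+a32*b23+a33*b33)"
  by (simp add: mat3_eq_iff matrix_matrix_mult_def sum_3)

lemma tr3: "transpose (mat3 a11 a12 a13 a21 a22 a23 a31 a32 a33) = mat3 a11 a21 a31 a12 a22 a32 a13 a23 a33"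
  by (simp add: mat3_eq_iff transpose_def)

lemma mat1_3: "mat 1 = mat3 1 0 0 0 1 0 0 0 1"
  by (simp add: mat3_eq_iff mat_def)

lemma det_mat3: "det (mat3 a11 a12 a13 a21 a22 a23 a31 a32 a33) =
  a11*a22*a33 + a12*a23*a31 + a13*a21*a32 - a11*a23*a32 - a12*a21*a33 - a13*a22*a31"
  by (simp add: det_3)

definition Tm :: "real \<Rightarrow> real \<Rightarrow> real \<Rightarrow> real \<Rightarrow> real^3^3" where
  "Tm a b c d = mat3 1 0 0 a c 0 b 0 d"
definition Sm :: "real \<Rightarrow> real \<Rightarrow> real \<Rightarrow> real \<Rightarrow> real^3^3" where
  "Sm a b c d = mat3 (-1) 0 0 a 0 d b c 0"

lemma Tm_inv: "c \<noteq> 0 \<Longrightarrow> d \<noteq> 0 \<Longrightarrow> Tm a b c d ** Tm (-a/c) (-b/d) (1/c) (1/d) = mat 1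
   \<and> Tm (-a/c) (-b/d) (1/c) (1/d) ** Tm a b c d = mat 1"
  by (simp add: Tm_def mm3 mat1_3 field_simps)

lemma Sm_inv: "c \<noteq> 0 \<Longrightarrow> d \<noteq> 0 \<Longrightarrow> Sm a b c d ** Sm (b/c) (a/d) (1/d) (1/c) = mat 1
   \<and> Sm (b/c) (a/d) (1/d) (1/c) ** Sm a b c d = mat 1"
  by (simp add: Sm_def mm3 mat1_3 field_simps)

lemma vec3_eq: "(x::real^3) = y \<longleftrightarrow> x$1 = y$1 \<and> x$2 = y$2 \<and> x$3 = y$3"
  by (auto simp: vec_eq_iff forall_3)

lemma Tm_br: "sol_br (Tm a b c d *v u) (Tm a b c d *v v) = Tm a b c d *v sol_br u v"
  by (simp add: vec3_eq Tm_def algebra_simps)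

lemma Sm_br: "sol_br (Sm a b c d *v u) (Sm a b c d *v v) = Sm a b c d *v sol_br u v"
  unfolding vec3_eq Sm_def by (simp add: mv3 br_1 br_2 br_3) (simp add: algebra_simps)

lemma Tm_gram: "transpose (Tm a b c d) ** mat3 s11 s12 s13 s12 s22 s23 s13 s23 s33 ** Tm a b c d =
  (let G11 = s11 + 2 * a * s12 + 2 * b * s13 + a^2 * s22 + 2 * a * b * s23 + b^2 * s33;
       G12 = c * (s12 + a * s22 + b * s23); G13 = d * (s13 + a * s23 + b * s33) in
   mat3 G11 G12 G13 G12 (c^2 * s22) (c * d * s23) G13 (c * d * s23) (d^2 * s33))"
  unfolding Tm_def tr3 mm3 Let_def mat3_eq_iff mat3_comp by (simp add: power2_eq_square) (simp add: algebra_simps)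

lemma Sm_gram: "transpose (Sm a b c d) ** mat3 s11 s12 s13 s12 s22 s23 s13 s23 s33 ** Sm a b c d =
  (let G11 = s11 - 2 * a * s12 - 2 * b * s13 + a^2 * s22 + 2 * a * b * s23 + b^2 * s33;
       G12 = c * (-s13 + a * s23 + b * s33); G13 = d * (-s12 + a * s22 + b * s23) in
   mat3 G11 G12 G13 G12 (c^2 * s33) (c * d * s23) G13 (c * d * s23) (d^2 * s22))"
  unfolding Sm_def tr3 mm3 Let_def mat3_eq_iff mat3_comp by (simp add: power2_eq_square) (simp add: algebra_simps)

lemma equiv_intro:
  assumes AB: "A ** B = mat 1" and BA: "B ** A = mat 1"
  and br: "\<And>u v. sol_br (B *v u) (B *v v) = B *v sol_br u v"
  and G: "transpose A ** S ** A = S0"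
  and h1: "\<And>x. x \<in> h \<Longrightarrow> B *v x \<in> h0" and h2: "\<And>y. y \<in> h0 \<Longrightarrow> A *v y \<in> h"
  shows "kundt_equiv h S h0 S0"
proof -
  have ABv: "A *v (B *v x) = x" for x using AB by (simp add: matrix_vector_mul_assoc)
  have BAv: "B *v (A *v x) = x" for x using BA by (simp add: matrix_vector_mul_assoc)
  have inj: "inj ((*v) B)"
  proof (rule injI)
    fix x y assume "B *v x = B *v y"
    then have "A *v (B *v x) = A *v (B *v y)" by simp
    then show "x = y" by (simp add: ABv)
  qed
  have surj: "surj ((*v) B)" by (rule surjI[where f="(*v) A"]) (rule BAv)
  have bij: "bij ((*v) B)" using inj surj by (simp add: bij_def)
  have aut: "sol_aut ((*v) B)" unfolding sol_aut_def
    using bij br matrix_vector_mul_linear by simp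
  have img: "((*v) B) ` h = h0"
  proof
    show "(*v) B ` h \<subseteq> h0" using h1 by auto
    show "h0 \<subseteq> (*v) B ` h"
    proof
      fix y assume "y \<in> h0"
      then have "A *v y \<in> h" by (rule h2)
      then show "y \<in> (*v) B ` h" using BAv[of y] by (simp add: rev_image_eqI)
    qed
  qed
  have spq: "sp S0 (B *v u) (B *v v) = sp S u v" for u v
  proof -
    have "S0 *v (B *v v) = transpose A *v (S *v (A *v (B *v v)))"
      unfolding G[symmetric] by (simp add: matrix_vector_mul_assoc matrix_mul_assoc)
    then have "S0 *v (B *v v) = transpose A *v (S *v v)" by (simp add: ABv)
    then have "sp S0 (B *v u) (B *v v) = (B *v u) \<bullet> (transpose A *v (S *v v))"
      by (simp add: sp_def)
    also have "\<dots> = ((B *v u) v* transpose A) \<bullet> (S *v v)" by (rule dot_lmul_matrix[symmetric])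
    also have "\<dots> = u \<bullet> (S *v v)" by (simp only: vector_transpose_matrix ABv)
    finally show ?thesis by (simp add: sp_def)
  qed
  show ?thesis unfolding kundt_equiv_def using aut img spq by blast
qed

lemma equiv_T:
  assumes "c \<noteq> 0" "d \<noteq> 0"
  and "transpose (Tm a b c d) ** S ** Tm a b c d = S0"
  and "\<And>x. x \<in> h \<Longrightarrow> Tm (-a/c) (-b/d) (1/c) (1/d) *v x \<in> h0"
  and "\<And>y. y \<in> h0 \<Longrightarrow> Tm a b c d *v y \<in> h"
  shows "kundt_equiv h S h0 S0"
  using assms Tm_inv[OF assms(1,2)] by (intro equiv_intro[of "Tm a b c d" "Tm (-a/c) (-b/d) (1/c) (1/d)"]) (auto simp: Tm_br)

lemma equiv_S:
  assumes "c \<noteq> 0" "d \<noteq> 0"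
  and "transpose (Sm a b c d) ** S ** Sm a b c d = S0"
  and "\<And>x. x \<in> h \<Longrightarrow> Sm (b/c) (a/d) (1/d) (1/c) *v x \<in> h0"
  and "\<And>y. y \<in> h0 \<Longrightarrow> Sm a b c d *v y \<in> h"
  shows "kundt_equiv h S h0 S0"
  using assms Sm_inv[OF assms(1,2)] by (intro equiv_intro[of "Sm a b c d" "Sm (b/c) (a/d) (1/d) (1/c)"]) (auto simp: Sm_br)

lemma sp_sym: "transpose S = S \<Longrightarrow> sp S x w = (S *v x) \<bullet> w"
proof -
  assume "transpose S = S"
  then have "x v* S = S *v x" by (metis vector_transpose_matrix)
  then show ?thesis unfolding sp_def by (metis dot_lmul_matrix)
qed

lemma nondeg: "invertible S \<Longrightarrow> S *v v = 0 \<Longrightarrow> v = 0"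
proof -
  assume "invertible S" "S *v v = 0"
  then obtain S' where "S' ** S = mat 1" unfolding invertible_def by blast
  then have "v = S' *v (S *v v)" by (simp add: matrix_vector_mul_assoc)
  then show "v = 0" using \<open>S *v v = 0\<close> by simp
qed

lemma lc_zero:
  assumes sym: "transpose S = S" and inv: "invertible S" and lc0: "lc S e e = 0"
  shows "sp S (sol_br w e) e = 0"
proof -
  define a where "a = S *v e"
  define g :: "real^3" where "g = (\<chi> i. if i = 1 then e$2 * a$2 - e$3 * a$3 else if i = 2 then - e$1 * a$2 else e$1 * a$3)"
  have g1: "g$1 = e$2 * a$2 - e$3 * a$3" "g$2 = - e$1 * a$2" "g$3 = e$1 * a$3" by (simp_all add: g_def)
  have key: "sp S (sol_br w e) e = g \<bullet> w" for w
    unfolding sp_def a_def[symmetric] inner3 g1 by simp algebra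
  have bree: "sol_br e e = 0" by (simp add: vec3_eq)
  have sp0: "sp S 0 w = 0" for w by (simp add: sp_def)
  define P where "P = (\<lambda>x. \<forall>w. 2 * sp S x w =
      sp S (sol_br e e) w + sp S (sol_br w e) e + sp S (sol_br w e) e)"
  have P_iff: "P x \<longleftrightarrow> S *v x = g" for x
  proof
    assume "P x"
    then have "(S *v x) \<bullet> w = g \<bullet> w" for w
      unfolding P_def using sp_sym[OF sym] key bree sp0 by simp
    from this[of "X 1"] this[of "X 2"] this[of "X 3"] show "S *v x = g"
      by (simp add: vec3_eq inner3 X_comp)
  next
    assume "S *v x = g"
    then show "P x" unfolding P_def using sp_sym[OF sym] key bree sp0 by simp
  qed
  obtain S' where S': "S ** S' = mat 1" "S' ** S = mat 1" using inv unfolding invertible_def by blast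
  define x0 where "x0 = S' *v g"
  have Px0: "P x0" unfolding P_iff x0_def using S' by (simp add: matrix_vector_mul_assoc)
  have uniq: "P y \<Longrightarrow> y = x0" for y
  proof -
    assume "P y"
    then have "S *v y = g" by (simp add: P_iff)
    then have "S' *v (S *v y) = x0" by (simp add: x0_def)
    then show "y = x0" using S' by (simp add: matrix_vector_mul_assoc)
  qed
  have "lc S e e = x0" unfolding lc_def P_def[symmetric] using Px0 uniq by (rule the_equality)
  then have "x0 = 0" using lc0 by simp
  then have "g = 0" using Px0 unfolding P_iff by simp
  then show ?thesis using key by simp
qed

lemma lor_det: assumes "lorentzian S" shows "transpose S = S" "det S < 0"
proof -
  show "transpose S = S" using assms unfolding lorentzian_def by blast
  obtain P :: "real^3^3" where "transpose P ** S ** P = mat3 (-1) 0 0 0 1 0 0 0 1"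
    using assms unfolding lorentzian_def by blast
  then have "det (transpose P ** S ** P) = -1" by (simp add: det_mat3)
  then have "det P * det S * det P = -1" by (simp add: det_mul det_transpose)
  then have e: "det S * (det P)^2 = -1" by (simp add: power2_eq_square algebra_simps)
  show "det S < 0"
  proof (rule ccontr)
    assume "\<not> det S < 0"
    then have "det S * (det P)^2 \<ge> 0" by simp
    then show False using e by simp
  qed
qed

lemma span31: "span {X 3, X 1} = {y. y$2 = 0}"
proof (intro set_eqI iffI)
  fix y :: "real^3" assume "y \<in> span {X 3, X 1}"
  then obtain k j where "y - k *\<^sub>R X 3 = j *\<^sub>R X 1" by (auto simp: span_insert span_singleton)
  then show "y \<in> {y. y$2 = 0}" by (simp add: vec3_eq X_comp)
next
  fix y :: "real^3" assume "y \<in> {y. y$2 = 0}"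
  then have "y - (y$3) *\<^sub>R X 3 = (y$1) *\<^sub>R X 1" by (simp add: vec3_eq X_comp)
  then have "y = (y$3) *\<^sub>R X 3 + (y$1) *\<^sub>R X 1" by (simp add: algebra_simps)
  then show "y \<in> span {X 3, X 1}" by (metis span_add span_scale span_base insertI1 insertI2 singletonI)
qed

lemma span23: "span {X 2, X 3} = {y. y$1 = 0}"
proof (intro set_eqI iffI)
  fix y :: "real^3" assume "y \<in> span {X 2, X 3}"
  then obtain k j where "y - k *\<^sub>R X 2 = j *\<^sub>R X 3" by (auto simp: span_insert span_singleton)
  then show "y \<in> {y. y$1 = 0}" by (simp add: vec3_eq X_comp)
next
  fix y :: "real^3" assume "y \<in> {y. y$1 = 0}"
  then have "y - (y$2) *\<^sub>R X 2 = (y$3) *\<^sub>R X 3" by (simp add: vec3_eq X_comp)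
  then have "y = (y$2) *\<^sub>R X 2 + (y$3) *\<^sub>R X 3" by (simp add: algebra_simps)
  then show "y \<in> span {X 2, X 3}" by (metis span_add span_scale span_base insertI1 insertI2 singletonI)
qed

definition G5 :: "(real^3) set \<Rightarrow> real^3^3 \<Rightarrow> bool" where
  "G5 h S \<longleftrightarrow> (\<exists>h0 S0. kundt_equiv h S h0 S0 \<and>
    ((\<exists>l>0. S0 = mat3 l 0 0 0 0 (-1) 0 (-1) 0 \<and>
        (h0 = span {X 2, X 1} \<or> h0 = span {X 3, X 1})) \<or>
     (\<exists>l. l \<noteq> 0 \<and> S0 = mat3 (l^2) 0 0 0 l 1 0 1 0 \<and> h0 = span {X 3, X 1}) \<or>
     (\<exists>b>0. S0 = mat3 0 0 (-2/b) 0 1 1 (-2/b) 1 1 \<and> h0 = span {X 2, X 3}) \<or>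
     (S0 = mat3 0 0 1 0 1 0 1 0 0 \<and> h0 = span {X 2, X 3})))"

definition D12 :: "real^3^3 \<Rightarrow> bool" where
  "D12 S0 \<longleftrightarrow> (\<exists>l>0. S0 = mat3 l 0 0 0 0 (-1) 0 (-1) 0) \<or> (\<exists>l. l \<noteq> 0 \<and> S0 = mat3 (l^2) 0 0 0 l 1 0 1 0)"

lemma G5_D12: "kundt_equiv h S (span {X 3, X 1}) S0 \<Longrightarrow> D12 S0 \<Longrightarrow> G5 h S"
  unfolding G5_def D12_def by blast

lemma choose_cd:
  assumes g: "g > 0" and s23: "s23 \<noteq> 0"
  shows "\<exists>c d. c \<noteq> 0 \<and> d \<noteq> 0 \<and> D12 (mat3 g 0 0 0 (c^2 * s) (c * d * s23) 0 (c * d * s23) 0)"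
proof (cases "s = 0")
  case True
  have "D12 (mat3 g 0 0 0 (1^2 * s) (1 * (-1/s23) * s23) 0 (1 * (-1/s23) * s23) 0)"
    unfolding D12_def using True g s23 by auto
  then show ?thesis using s23 by (intro exI[of _ 1] exI[of _ "-1/s23"]) simp
next
  case False
  define l where "l = (if s > 0 then sqrt g else - sqrt g)"
  have lq: "l / s > 0"
  proof (cases "s > 0")
    case True then show ?thesis using g by (simp add: l_def)
  next
    case F: False
    then have "s < 0" using False by simp
    then have "sqrt g / s < 0" using g by (simp add: divide_pos_neg)
    then show ?thesis using F by (simp add: l_def)
  qed
  define c where "c = sqrt (l / s)"
  have c0: "c > 0" using lq by (simp add: c_def)
  have c2: "c^2 * s = l" using lq False by (simp add: c_def)
  have l2: "l^2 = g" using g by (simp add: l_def)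
  have l0: "l \<noteq> 0" using g by (simp add: l_def)
  define d where "d = 1 / (c * s23)"
  have cd: "c * d * s23 = 1" using c0 s23 by (simp add: d_def)
  have d0: "d \<noteq> 0" using c0 s23 by (simp add: d_def)
  have "D12 (mat3 g 0 0 0 (c^2 * s) (c * d * s23) 0 (c * d * s23) 0)"
  proof -
    have "mat3 g 0 0 0 (c^2 * s) (c * d * s23) 0 (c * d * s23) 0 = mat3 (l^2) 0 0 0 l 1 0 1 0"
      by (simp only: c2 cd l2)
    then show ?thesis unfolding D12_def using l0 by metis
  qed
  then show ?thesis using c0 d0 by (intro exI[of _ c] exI[of _ d]) simp
qed

lemma caseB:
  assumes S: "S = mat3 s11 s12 (-t * s23) s12 s22 s23 (-t * s23) s23 0"
  and s23: "s23 \<noteq> 0" and g: "s11 + 2 * t * s12 + t^2 * s22 > 0"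
  and h: "h = {x. x$2 = t * x$1}"
  shows "G5 h S"
proof -
  define b where "b = -(s12 + t * s22) / s23"
  obtain c d where cd: "c \<noteq> 0" "d \<noteq> 0"
    and D: "D12 (mat3 (s11 + 2 * t * s12 + t^2 * s22) 0 0 0 (c^2 * s22) (c * d * s23) 0 (c * d * s23) 0)"
    using choose_cd[OF g s23] by blast
  have gram: "transpose (Tm t b c d) ** S ** Tm t b c d =
     mat3 (s11 + 2 * t * s12 + t^2 * s22) 0 0 0 (c^2 * s22) (c * d * s23) 0 (c * d * s23) 0"
    unfolding S Tm_gram Let_def mat3_eq_iff mat3_comp using s23
    by (simp add: b_def field_simps power2_eq_square)
  have "kundt_equiv h S (span {X 3, X 1}) (mat3 (s11 + 2 * t * s12 + t^2 * s22) 0 0 0 (c^2 * s22) (c * d * s23) 0 (c * d * s23) 0)"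
  proof (rule equiv_T[OF cd gram])
    fix x assume "x \<in> h"
    then show "Tm (- t / c) (- b / d) (1 / c) (1 / d) *v x \<in> span {X 3, X 1}"
      unfolding span31 h Tm_def using cd by (simp add: field_simps)
  next
    fix y assume "y \<in> span {X 3, X 1}"
    then show "Tm t b c d *v y \<in> h"
      unfolding span31 h Tm_def by simp
  qed
  then show ?thesis using D by (rule G5_D12)
qed

lemma caseC:
  assumes S: "S = mat3 s11 (-t * s23) s13 (-t * s23) 0 s23 s13 s23 s33"
  and s23: "s23 \<noteq> 0" and g: "s11 + 2 * t * s13 + t^2 * s33 > 0"
  and h: "h = {x. x$3 = t * x$1}"
  shows "G5 h S"
proof -
  define a where "a = (s13 + t * s33) / s23"
  obtain c d where cd: "c \<noteq> 0" "d \<noteq> 0"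
    and D: "D12 (mat3 (s11 + 2 * t * s13 + t^2 * s33) 0 0 0 (c^2 * s33) (c * d * s23) 0 (c * d * s23) 0)"
    using choose_cd[OF g s23] by blast
  have gram: "transpose (Sm a (-t) c d) ** S ** Sm a (-t) c d =
     mat3 (s11 + 2 * t * s13 + t^2 * s33) 0 0 0 (c^2 * s33) (c * d * s23) 0 (c * d * s23) 0"
    unfolding S Sm_gram Let_def mat3_eq_iff mat3_comp using s23
    by (simp add: a_def field_simps power2_eq_square)
  have "kundt_equiv h S (span {X 3, X 1}) (mat3 (s11 + 2 * t * s13 + t^2 * s33) 0 0 0 (c^2 * s33) (c * d * s23) 0 (c * d * s23) 0)"
  proof (rule equiv_S[OF cd gram])
    fix x assume "x \<in> h"
    then show "Sm (- t / c) (a / d) (1 / d) (1 / c) *v x \<in> span {X 3, X 1}"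
      unfolding span31 h Sm_def using cd by (simp add: field_simps)
  next
    fix y assume "y \<in> span {X 3, X 1}"
    then show "Sm a (-t) c d *v y \<in> h"
      unfolding span31 h Sm_def by simp
  qed
  then show ?thesis using D by (rule G5_D12)
qed

lemma caseA1:
  assumes S: "S = mat3 s11 s12 s13 s12 s22 0 s13 0 0"
  and s22: "s22 > 0" and s13: "s13 \<noteq> 0" and h: "h = {x. x$1 = 0}"
  shows "G5 h S"
proof -
  define a where "a = - s12 / s22"
  define c where "c = 1 / sqrt s22"
  define d where "d = 1 / s13"
  define b where "b = - (s11 + 2 * a * s12 + a^2 * s22) / (2 * s13)"
  have c0: "c \<noteq> 0" using s22 by (simp add: c_def)
  have d0: "d \<noteq> 0" using s13 by (simp add: d_def)
  have e1: "c^2 * s22 = 1" using s22 by (simp add: c_def power_divide)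
  have e2: "s12 + a * s22 = 0" using s22 by (simp add: a_def)
  have e3: "d * s13 = 1" using s13 by (simp add: d_def)
  have e4: "s11 + 2 * a * s12 + 2 * b * s13 + a^2 * s22 = 0" using s13 by (simp add: b_def field_simps)
  have gram: "transpose (Tm a b c d) ** S ** Tm a b c d = mat3 0 0 1 0 1 0 1 0 0"
    unfolding S Tm_gram Let_def mat3_eq_iff mat3_comp using e1 e2 e3 e4 by simp
  have "kundt_equiv h S (span {X 2, X 3}) (mat3 0 0 1 0 1 0 1 0 0)"
  proof (rule equiv_T[OF c0 d0 gram])
    fix x assume "x \<in> h"
    then show "Tm (- a / c) (- b / d) (1 / c) (1 / d) *v x \<in> span {X 2, X 3}"
      unfolding span23 h Tm_def by simp
  next
    fix y assume "y \<in> span {X 2, X 3}"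
    then show "Tm a b c d *v y \<in> h"
      unfolding span23 h Tm_def by simp
  qed
  then show ?thesis unfolding G5_def by blast
qed

lemma caseA2:
  assumes S: "S = mat3 s11 s12 s13 s12 0 0 s13 0 s33"
  and s33: "s33 > 0" and s12: "s12 \<noteq> 0" and h: "h = {x. x$1 = 0}"
  shows "G5 h S"
proof -
  define b where "b = s13 / s33"
  define c where "c = 1 / sqrt s33"
  define d where "d = - 1 / s12"
  define a where "a = (s11 - 2 * b * s13 + b^2 * s33) / (2 * s12)"
  have c0: "c \<noteq> 0" using s33 by (simp add: c_def)
  have d0: "d \<noteq> 0" using s12 by (simp add: d_def)
  have e1: "c^2 * s33 = 1" using s33 by (simp add: c_def power_divide)
  have e2: "- s13 + b * s33 = 0" using s33 by (simp add: b_def)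
  have e3: "d * (- s12) = 1" using s12 by (simp add: d_def)
  have e4: "s11 - 2 * a * s12 - 2 * b * s13 + b^2 * s33 = 0" using s12 by (simp add: a_def field_simps)
  have gram: "transpose (Sm a b c d) ** S ** Sm a b c d = mat3 0 0 1 0 1 0 1 0 0"
    unfolding S Sm_gram Let_def mat3_eq_iff mat3_comp using e1 e2 e3 e4 by simp
  have "kundt_equiv h S (span {X 2, X 3}) (mat3 0 0 1 0 1 0 1 0 0)"
  proof (rule equiv_S[OF c0 d0 gram])
    fix x assume "x \<in> h"
    then show "Sm (b / c) (a / d) (1 / d) (1 / c) *v x \<in> span {X 2, X 3}"
      unfolding span23 h Sm_def by simp
  next
    fix y assume "y \<in> span {X 2, X 3}"
    then show "Sm a b c d *v y \<in> h"
      unfolding span23 h Sm_def by simp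
  qed
  then show ?thesis unfolding G5_def by blast
qed

lemma caseA3:
  assumes S: "S = mat3 s11 s12 s13 s12 (k * q^2) (-k * p * q) s13 (-k * p * q) (k * p^2)"
  and p: "p \<noteq> 0" and q: "q \<noteq> 0" and k: "k > 0" and D: "p * s12 + q * s13 \<noteq> 0"
  and h: "h = {x. x$1 = 0}"
  shows "G5 h S"
proof -
  define DD where "DD = p * s12 + q * s13"
  have DD0: "DD \<noteq> 0" using D by (simp add: DD_def)
  obtain \<epsilon> :: real where eps: "\<epsilon> = 1 \<or> \<epsilon> = -1" and epos: "\<epsilon> * (DD * p * q) > 0"
  proof (cases "DD * p * q > 0")
    case True then show ?thesis using that[of 1] by simp
  next
    case False
    then have "DD * p * q < 0" using DD0 p q by (simp add: linorder_not_less order_le_less)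
    then show ?thesis using that[of "-1"] by simp
  qed
  have e2: "\<epsilon>^2 = 1" using eps by auto
  define \<kappa> where "\<kappa> = sqrt k"
  have kap: "\<kappa> > 0" using k by (simp add: \<kappa>_def)
  have kap2: "\<kappa>^2 = k" using k by (simp add: \<kappa>_def)
  define c where "c = \<epsilon> / (\<kappa> * q)"
  define d where "d = - \<epsilon> / (\<kappa> * p)"
  define r where "r = - s12 / (k * q)"
  define b where "b = - q * (s11 + 2 * s12 * r / q + k * r^2) / (2 * DD)"
  define a where "a = (r + b * p) / q"
  define \<beta> where "\<beta> = 2 * \<kappa> * p * q * \<epsilon> / DD"
  have epsnz: "\<epsilon> \<noteq> 0" using eps by auto
  have c0: "c \<noteq> 0" using epsnz kap q by (simp add: c_def)
  have d0: "d \<noteq> 0" using epsnz kap p by (simp add: d_def)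
  have aqbp: "a * q - b * p = r" using q by (simp add: a_def field_simps)
  have kqr: "k * q * r = - s12" using k q by (simp add: r_def field_simps)
  have quad: "a^2 * (k * q^2) + 2 * a * b * (-k * p * q) + b^2 * (k * p^2) = k * (a * q - b * p)^2"
    by (simp add: power2_eq_square algebra_simps)
  have lin: "2 * a * s12 + 2 * b * s13 = (2 * r * s12 + 2 * b * DD) / q"
    using q by (simp add: a_def DD_def field_simps)
  have bD: "2 * b * DD = - q * (s11 + 2 * s12 * r / q + k * r^2)"
    using DD0 by (simp add: b_def)
  have G11: "s11 + 2 * a * s12 + 2 * b * s13 + a^2 * (k * q^2) + 2 * a * b * (-k * p * q) + b^2 * (k * p^2) = 0"
  proof -
    have "s11 + 2 * a * s12 + 2 * b * s13 + a^2 * (k * q^2) + 2 * a * b * (-k * p * q) + b^2 * (k * p^2)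
        = s11 + (2 * r * s12 + 2 * b * DD) / q + k * r^2"
      using lin quad aqbp by simp
    also have "\<dots> = s11 + (2 * r * s12 - q * (s11 + 2 * s12 * r / q + k * r^2)) / q + k * r^2"
      using bD by simp
    also have "\<dots> = 0" using q by (simp add: field_simps)
    finally show ?thesis .
  qed
  have G12: "c * (s12 + a * (k * q^2) + b * (-k * p * q)) = 0"
  proof -
    have "s12 + a * (k * q^2) + b * (-k * p * q) = s12 + k * q * (a * q - b * p)"
      by (simp add: power2_eq_square algebra_simps)
    then show ?thesis using aqbp kqr by simp
  qed
  have G13: "d * (s13 + a * (-k * p * q) + b * (k * p^2)) = - 2 / \<beta>"
  proof -
    have "s13 + a * (-k * p * q) + b * (k * p^2) = s13 - k * p * (a * q - b * p)"
      by (simp add: power2_eq_square algebra_simps)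
    also have "\<dots> = s13 - k * p * r" using aqbp by simp
    also have "\<dots> = DD / q" using k q by (simp add: r_def DD_def field_simps)
    finally have "d * (s13 + a * (-k * p * q) + b * (k * p^2)) = - \<epsilon> * DD / (\<kappa> * p * q)"
      by (simp add: d_def)
    also have "\<dots> = - 2 / \<beta>"
      using eps kap p q DD0 by (auto simp: \<beta>_def field_simps)
    finally show ?thesis .
  qed
  have G22: "c^2 * (k * q^2) = 1" using kap2 e2 kap q k by (simp add: c_def power_divide power_mult_distrib)
  have G33: "d^2 * (k * p^2) = 1" using kap2 e2 kap p k by (simp add: d_def power_divide power_mult_distrib)
  have G23: "c * d * (-k * p * q) = 1"
  proof -
    have "c * d * (-k * p * q) = \<epsilon>^2 * k / \<kappa>^2"
      using kap p q by (simp add: c_def d_def power2_eq_square field_simps)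
    then show ?thesis using kap2 e2 k by simp
  qed
  have bpos: "\<beta> > 0"
  proof -
    have "\<beta> = 2 * \<kappa> * (\<epsilon> * (DD * p * q)) / DD^2" using DD0 by (simp add: \<beta>_def power2_eq_square field_simps)
    then show ?thesis using kap epos DD0 by simp
  qed
  have gram: "transpose (Tm a b c d) ** S ** Tm a b c d = mat3 0 0 (-2/\<beta>) 0 1 1 (-2/\<beta>) 1 1"
    unfolding S Tm_gram Let_def mat3_eq_iff mat3_comp using G11 G12 G13 G22 G23 G33 by simp
  have "kundt_equiv h S (span {X 2, X 3}) (mat3 0 0 (-2/\<beta>) 0 1 1 (-2/\<beta>) 1 1)"
  proof (rule equiv_T[OF c0 d0 gram])
    fix x assume "x \<in> h"
    then show "Tm (- a / c) (- b / d) (1 / c) (1 / d) *v x \<in> span {X 2, X 3}"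
      unfolding span23 h Tm_def by simp
  next
    fix y assume "y \<in> span {X 2, X 3}"
    then show "Tm a b c d *v y \<in> h"
      unfolding span23 h Tm_def by simp
  qed
  then show ?thesis unfolding G5_def using bpos by blast
qed

lemma main_G5:
  assumes K: "kundt_pair h S"
  shows "G5 h S"
proof -
  have lor: "lorentzian S" and sub: "subspace h" and dim2: "dim h = 2"
    and alg: "\<And>u v. u \<in> h \<Longrightarrow> v \<in> h \<Longrightarrow> sol_br u v \<in> h"
    and deg: "\<exists>x\<in>h. x \<noteq> 0 \<and> (\<forall>y\<in>h. sp S x y = 0)"
    and orc: "\<And>e. e \<in> orth S h \<Longrightarrow> lc S e e = 0"
    using K unfolding kundt_pair_def by auto
  have sym: "transpose S = S" and detn: "det S < 0" using lor_det[OF lor] by auto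
  have inv: "invertible S" using detn by (simp add: invertible_det_nz)
  define s11 where "s11 = S$1$1"
  define s12 where "s12 = S$1$2"
  define s13 where "s13 = S$1$3"
  define s22 where "s22 = S$2$2"
  define s23 where "s23 = S$2$3"
  define s33 where "s33 = S$3$3"
  have Sm3: "S = mat3 s11 s12 s13 s12 s22 s23 s13 s23 s33"
    unfolding s11_def s12_def s13_def s22_def s23_def s33_def by (rule sym_mat3[OF sym])
  have detS: "s11 * s22 * s33 + s12 * s23 * s13 + s13 * s12 * s23 - s11 * s23 * s23 - s12 * s12 * s33 - s13 * s22 * s13 < 0"
    using detn unfolding Sm3 det_mat3 .
  have "dim h < DIM(real^3)" using dim2 by simp
  then obtain n :: "real^3" where n0: "n \<noteq> 0" and nsub: "span h \<subseteq> {x. n \<bullet> x = 0}"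
    using lowdim_subset_hyperplane by blast
  have "h = {x. n \<bullet> x = 0}"
  proof (rule subspace_dim_equal[OF sub subspace_hyperplane])
    show "h \<subseteq> {x. n \<bullet> x = 0}" using nsub span_superset[of h] by blast
    show "dim {x. n \<bullet> x = 0} \<le> dim h" using n0 dim2 by (simp add: dim_hyperplane)
  qed
  then have hmem: "x \<in> h \<longleftrightarrow> n$1 * x$1 + n$2 * x$2 + n$3 * x$3 = 0" for x
    by (simp add: inner3)
  have n23: "n$2 = 0 \<or> n$3 = 0"
  proof (rule ccontr)
    assume nn: "\<not> (n$2 = 0 \<or> n$3 = 0)"
    define u where "u = n$2 *\<^sub>R X 1 - n$1 *\<^sub>R X 2"
    define v where "v = n$3 *\<^sub>R X 2 - n$2 *\<^sub>R X 3"
    have "u \<in> h" unfolding hmem u_def by (simp add: X_comp algebra_simps)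
    moreover have "v \<in> h" unfolding hmem v_def by (simp add: X_comp algebra_simps)
    ultimately have "sol_br u v \<in> h" by (rule alg)
    then have "2 * (n$2)^2 * n$3 = 0" unfolding hmem u_def v_def
      by (simp add: X_comp power2_eq_square algebra_simps)
    then show False using nn by simp
  qed
  obtain e where eh: "e \<in> h" and e0: "e \<noteq> 0" and eort: "\<And>y. y \<in> h \<Longrightarrow> sp S e y = 0"
    using deg by blast
  have "lc S e e = 0" using eort by (intro orc) (simp add: orth_def)
  then have F1: "sp S (sol_br w e) e = 0" for w using lc_zero[OF sym inv] by blast
  have nd: "\<not> (s11 * e$1 + s12 * e$2 + s13 * e$3 = 0 \<and> s12 * e$1 + s22 * e$2 + s23 * e$3 = 0
     \<and> s13 * e$1 + s23 * e$2 + s33 * e$3 = 0)"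
  proof
    assume "s11 * e$1 + s12 * e$2 + s13 * e$3 = 0 \<and> s12 * e$1 + s22 * e$2 + s23 * e$3 = 0
     \<and> s13 * e$1 + s23 * e$2 + s33 * e$3 = 0"
    then have "S *v e = 0" unfolding Sm3 by (simp add: vec3_eq)
    then show False using nondeg[OF inv] e0 by blast
  qed
  have spe: "sp S e y = e$1 * (s11 * y$1 + s12 * y$2 + s13 * y$3) + e$2 * (s12 * y$1 + s22 * y$2 + s23 * y$3)
     + e$3 * (s13 * y$1 + s23 * y$2 + s33 * y$3)" for y
    unfolding Sm3 sp_mat3 ..
  consider (A) "n$2 = 0" "n$3 = 0" | (B) "n$3 = 0" "n$2 \<noteq> 0" | (C) "n$2 = 0" "n$3 \<noteq> 0"
    using n23 by blast
  then show ?thesis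
  proof cases
    case A
    then have n1: "n$1 \<noteq> 0" using n0 by (auto simp: vec3_eq)
    have hA: "h = {x. x$1 = 0}" using hmem A n1 by auto
    have e1: "e$1 = 0" using eh hA by simp
    have "X 2 \<in> h" "X 3 \<in> h" using hA by (auto simp: X_comp)
    then have q1: "e$2 * s22 + e$3 * s23 = 0" and q2: "e$2 * s23 + e$3 * s33 = 0"
      using eort[of "X 2"] eort[of "X 3"] e1 unfolding spe by (auto simp: X_comp)
    consider "e$2 = 0" | "e$3 = 0" | "e$2 \<noteq> 0" "e$3 \<noteq> 0" by blast
    then show ?thesis
    proof cases
      case 1
      then have e3: "e$3 \<noteq> 0" using e0 e1 by (auto simp: vec3_eq)
      then have z: "s23 = 0" "s33 = 0" using q1 q2 1 by auto
      then have "s13^2 * s22 > 0" using detS by (simp add: power2_eq_square algebra_simps)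
      then have "s22 > 0" "s13 \<noteq> 0" by (auto simp: zero_less_mult_iff)
      then show ?thesis using caseA1[OF _ _ _ hA] Sm3 z by simp
    next
      case 2
      then have e2: "e$2 \<noteq> 0" using e0 e1 by (auto simp: vec3_eq)
      then have z: "s22 = 0" "s23 = 0" using q1 q2 2 by auto
      then have "s12^2 * s33 > 0" using detS by (simp add: power2_eq_square algebra_simps)
      then have "s33 > 0" "s12 \<noteq> 0" by (auto simp: zero_less_mult_iff)
      then show ?thesis using caseA2[OF _ _ _ hA] Sm3 z by simp
    next
      case 3
      define p where "p = e$2"
      define q where "q = e$3"
      define k where "k = s22 / q^2"
      have p0: "p \<noteq> 0" and q0: "q \<noteq> 0" using 3 by (auto simp: p_def q_def)
      have z22: "s22 = k * q^2" using q0 by (simp add: k_def)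
      have q1': "p * s22 + q * s23 = 0" and q2': "p * s23 + q * s33 = 0"
        using q1 q2 by (simp_all add: p_def q_def)
      have "q * s23 = q * (-k * p * q)" using q1' unfolding z22
        by (simp add: power2_eq_square algebra_simps)
      then have z23: "s23 = -k * p * q" by (simp only: mult_left_cancel[OF q0])
      have "q * s33 = q * (k * p^2)" using q2' unfolding z23
        by (simp add: power2_eq_square algebra_simps)
      then have z33: "s33 = k * p^2" by (simp only: mult_left_cancel[OF q0])
      have "k * (p * s12 + q * s13)^2 > 0" using detS unfolding z22 z23 z33
        by (simp add: power2_eq_square algebra_simps)
      then have kp: "k > 0" and Dn: "p * s12 + q * s13 \<noteq> 0" by (auto simp: zero_less_mult_iff)
      have SS: "S = mat3 s11 s12 s13 s12 (k * q^2) (-k * p * q) s13 (-k * p * q) (k * p^2)"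
        using Sm3 unfolding z22 z23 z33 .
      show ?thesis by (rule caseA3[OF SS p0 q0 kp Dn hA])
    qed
  next
    case B
    define t where "t = - n$1 / n$2"
    have hB: "h = {x. x$2 = t * x$1}"
    proof (intro set_eqI)
      fix x :: "real^3"
      have "n$2 * (x$2 - t * x$1) = n$1 * x$1 + n$2 * x$2" using B(2) by (simp add: t_def algebra_simps)
      then have "x \<in> h \<longleftrightarrow> n$2 * (x$2 - t * x$1) = 0" unfolding hmem using B(1) by simp
      then show "x \<in> h \<longleftrightarrow> x \<in> {x. x$2 = t * x$1}" using B(2) by simp
    qed
    have et: "e$2 = t * e$1" using eh hB by simp
    have "X 3 \<in> h" "X 1 + t *\<^sub>R X 2 \<in> h" using hB by (auto simp: X_comp)
    then have r3: "e$1 * s13 + e$2 * s23 + e$3 * s33 = 0"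
      and rf: "(e$1 * s11 + e$2 * s12 + e$3 * s13) + t * (e$1 * s12 + e$2 * s22 + e$3 * s23) = 0"
      using eort[of "X 3"] eort[of "X 1 + t *\<^sub>R X 2"] unfolding spe by (auto simp: X_comp algebra_simps)
    have "sp S (sol_br (X 2) e) e = 0" by (rule F1)
    then have r2: "e$1 * (s12 * e$1 + s22 * e$2 + s23 * e$3) = 0"
      unfolding Sm3 sp_mat3 by (simp add: X_comp algebra_simps)
    have ee1: "e$1 = 0"
    proof (rule ccontr)
      assume "e$1 \<noteq> 0"
      then have "s12 * e$1 + s22 * e$2 + s23 * e$3 = 0" using r2 by simp
      then show False using nd r3 rf by (simp add: algebra_simps)
    qed
    then have ee2: "e$2 = 0" using et by simp
    then have ee3: "e$3 \<noteq> 0" using e0 ee1 by (auto simp: vec3_eq)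
    have z33: "s33 = 0" using r3 ee1 ee2 ee3 by simp
    have "e$3 * (s13 + t * s23) = 0" using rf ee1 ee2 by (simp add: algebra_simps)
    then have "s13 + t * s23 = 0" using ee3 by simp
    then have z13: "s13 = - t * s23" by simp
    have "s23^2 * (s11 + 2 * t * s12 + t^2 * s22) > 0" using detS unfolding z33 z13
      by (simp add: power2_eq_square algebra_simps)
    then have s23: "s23 \<noteq> 0" and g: "s11 + 2 * t * s12 + t^2 * s22 > 0" by (auto simp: zero_less_mult_iff)
    have SS: "S = mat3 s11 s12 (-t * s23) s12 s22 s23 (-t * s23) s23 0"
      using Sm3 unfolding z33 z13 .
    show ?thesis by (rule caseB[OF SS s23 g hB])
  next
    case C
    define t where "t = - n$1 / n$3"
    have hC: "h = {x. x$3 = t * x$1}"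
    proof (intro set_eqI)
      fix x :: "real^3"
      have "n$3 * (x$3 - t * x$1) = n$1 * x$1 + n$3 * x$3" using C(2) by (simp add: t_def algebra_simps)
      then have "x \<in> h \<longleftrightarrow> n$3 * (x$3 - t * x$1) = 0" unfolding hmem using C(1) by simp
      then show "x \<in> h \<longleftrightarrow> x \<in> {x. x$3 = t * x$1}" using C(2) by simp
    qed
    have et: "e$3 = t * e$1" using eh hC by simp
    have "X 2 \<in> h" "X 1 + t *\<^sub>R X 3 \<in> h" using hC by (auto simp: X_comp)
    then have r2: "e$1 * s12 + e$2 * s22 + e$3 * s23 = 0"
      and rf: "(e$1 * s11 + e$2 * s12 + e$3 * s13) + t * (e$1 * s13 + e$2 * s23 + e$3 * s33) = 0"
      using eort[of "X 2"] eort[of "X 1 + t *\<^sub>R X 3"] unfolding spe by (auto simp: X_comp algebra_simps)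
    have "sp S (sol_br (X 3) e) e = 0" by (rule F1)
    then have r3: "e$1 * (s13 * e$1 + s23 * e$2 + s33 * e$3) = 0"
      unfolding Sm3 sp_mat3 by (simp add: X_comp algebra_simps)
    have ee1: "e$1 = 0"
    proof (rule ccontr)
      assume "e$1 \<noteq> 0"
      then have "s13 * e$1 + s23 * e$2 + s33 * e$3 = 0" using r3 by simp
      then show False using nd r2 rf by (simp add: algebra_simps)
    qed
    then have ee3: "e$3 = 0" using et by simp
    then have ee2: "e$2 \<noteq> 0" using e0 ee1 by (auto simp: vec3_eq)
    have z22: "s22 = 0" using r2 ee1 ee3 ee2 by simp
    have "e$2 * (s12 + t * s23) = 0" using rf ee1 ee3 by (simp add: algebra_simps)
    then have "s12 + t * s23 = 0" using ee2 by simp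
    then have z12: "s12 = - t * s23" by simp
    have "s23^2 * (s11 + 2 * t * s13 + t^2 * s33) > 0" using detS unfolding z22 z12
      by (simp add: power2_eq_square algebra_simps)
    then have s23: "s23 \<noteq> 0" and g: "s11 + 2 * t * s13 + t^2 * s33 > 0" by (auto simp: zero_less_mult_iff)
    have SS: "S = mat3 s11 (-t * s23) s13 (-t * s23) 0 s23 s13 s23 s33"
      using Sm3 unfolding z22 z12 .
    show ?thesis by (rule caseC[OF SS s23 g hC])
  qed
qed

theorem theorem5p4:
  assumes "kundt_pair h S"
  shows "\<exists>h0 S0. kundt_equiv h S h0 S0 \<and>
    ((\<exists>l>0. S0 = mat3 l 0 0 0 0 (-1) 0 (-1) 0 \<and>
        (h0 = span {X 2, X 1} \<or> h0 = span {X 3, X 1})) \<or>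
     (\<exists>l. l \<noteq> 0 \<and> S0 = mat3 (l^2) 0 0 0 l 1 0 1 0 \<and> h0 = span {X 3, X 1}) \<or>
     (\<exists>b>0. S0 = mat3 0 0 (-2/b) 0 1 1 (-2/b) 1 1 \<and> h0 = span {X 2, X 3}) \<or>
     (S0 = mat3 0 0 1 0 1 0 1 0 0 \<and> h0 = span {X 2, X 3}))"
  using main_G5[OF assms] unfolding G5_def .

end
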